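(* Let $\langle U,B\rangle$ be a 3-frame (i.e. $U\neq\emptyset$ and $B\subseteq U^3$), and define for $X,Y\subseteq U$ $\langle B\rangle(X,Y)=\{u\in U\mid \exists x\in X\,\exists y\in Y\, B(x,u,y)\}$ and $[\![B]\!](X,Y)=\{u\in U\mid \forall x\in X\,\forall y\in Y\, B(x,u,y)\}$. Then: (i) $B(a,a,a)$ for all $a\in U$ iff $X\subseteq\langle B\rangle(X,X)$ for all $X\subseteq U$; (ii) ($B(a,b,c)\Rightarrow B(c,b,a)$ for all $a,b,c$) iff $\langle B\rangle(X,Y)\subseteq\langle B\rangle(Y,X)$ for all $X,Y\subseteq U$; (iii) ($B(a,b,c)\Rightarrow B(c,b,a)$ for all $a,b,c$) iff $[\![B]\!](X,Y)\subseteq[\![B]\!](Y,X)$ for all $X,Y\subseteq U$; (iv) ($B(a,b,c)\Rightarrow B(a,a,b)$ for all $a,b,c$) iff $Y\cap\langle B\rangle(X,Z)\subseteq\langle B\rangle(X\cap\langle B\rangle(X,Y),Z)$ for all $X,Y,Z\subseteq U$; (v) ($B(a,b,c)\wedge B(a,c,b)\Rightarrow b=c$ for all $a,b,c$) iff $\langle B\rangle\big(X,[\![B]\!](X,U\setminus Y)\cap Y\big)\subseteq Y$ for all $X,Y\subseteq U$; (vi) ($B(a,b,a)\Rightarrow a=b$ for all $a,b$) iff $[\![B]\!](X,X)\subseteq X$ for all non-empty $X\subseteq U$; (vii) ($B(a,a,b)$ for all $a,b$) iff $X\subseteq\langle B\rangle(X,Y)$ for all $X\subseteq U$ and all non-empty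 $Y\subseteq U$. *)

theory Defs
  imports Main
begin

definition frame3 :: "'a set \<Rightarrow> ('a \<Rightarrow> 'a \<Rightarrow> 'a \<Rightarrow> bool) \<Rightarrow> bool" where
  "frame3 U B \<longleftrightarrow> U \<noteq> {} \<and> (\<forall>x y z. B x y z \<longrightarrow> x \<in> U \<and> y \<in> U \<and> z \<in> U)"

definition dia :: "'a set \<Rightarrow> ('a \<Rightarrow> 'a \<Rightarrow> 'a \<Rightarrow> bool) \<Rightarrow> 'a set \<Rightarrow> 'a set \<Rightarrow> 'a set" where
  "dia U B X Y = {u \<in> U. \<exists>x\<in>X. \<exists>y\<in>Y. B x u y}"

definition box :: "'a set \<Rightarrow> ('a \<Rightarrow> 'a \<Rightarrow> 'a \<Rightarrow> bool) \<Rightarrow> 'a set \<Rightarrow> 'a set \<Rightarrow> 'a set" where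
  "box U B X Y = {u \<in> U. \<forall>x\<in>X. \<forall>y\<in>Y. B x u y}"

end

theory Submission
  imports Defs
begin

theorem theorem20:
  fixes U :: "'a set" and B :: "'a \<Rightarrow> 'a \<Rightarrow> 'a \<Rightarrow> bool"
  assumes "frame3 U B"
  shows
   "((\<forall>a\<in>U. B a a a) \<longleftrightarrow> (\<forall>X. X \<subseteq> U \<longrightarrow> X \<subseteq> dia U B X X))
  \<and> ((\<forall>a\<in>U. \<forall>b\<in>U. \<forall>c\<in>U. B a b c \<longrightarrow> B c b a) \<longleftrightarrow>
       (\<forall>X Y. X \<subseteq> U \<longrightarrow> Y \<subseteq> U \<longrightarrow> dia U B X Y \<subseteq> dia U B Y X))
  \<and> ((\<forall>a\<in>U. \<forall>b\<in>U. \<forall>c\<in>U. B a b c \<longrightarrow> B c b a) \<longleftrightarrow>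
       (\<forall>X Y. X \<subseteq> U \<longrightarrow> Y \<subseteq> U \<longrightarrow> box U B X Y \<subseteq> box U B Y X))
  \<and> ((\<forall>a\<in>U. \<forall>b\<in>U. \<forall>c\<in>U. B a b c \<longrightarrow> B a a b) \<longleftrightarrow>
       (\<forall>X Y Z. X \<subseteq> U \<longrightarrow> Y \<subseteq> U \<longrightarrow> Z \<subseteq> U \<longrightarrow>
          Y \<inter> dia U B X Z \<subseteq> dia U B (X \<inter> dia U B X Y) Z))
  \<and> ((\<forall>a\<in>U. \<forall>b\<in>U. \<forall>c\<in>U. B a b c \<and> B a c b \<longrightarrow> b = c) \<longleftrightarrow>
       (\<forall>X Y. X \<subseteq> U \<longrightarrow> Y \<subseteq> U \<longrightarrow>
          dia U B X (box U B X (U - Y) \<inter> Y) \<subseteq> Y))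
  \<and> ((\<forall>a\<in>U. \<forall>b\<in>U. B a b a \<longrightarrow> a = b) \<longleftrightarrow>
       (\<forall>X. X \<subseteq> U \<longrightarrow> X \<noteq> {} \<longrightarrow> box U B X X \<subseteq> X))
  \<and> ((\<forall>a\<in>U. \<forall>b\<in>U. B a a b) \<longleftrightarrow>
       (\<forall>X Y. X \<subseteq> U \<longrightarrow> Y \<subseteq> U \<longrightarrow> Y \<noteq> {} \<longrightarrow> X \<subseteq> dia U B X Y))"
proof -
  have U: "\<And>x y z. B x y z \<Longrightarrow> x \<in> U \<and> y \<in> U \<and> z \<in> U" using assms by (auto simp: frame3_def)
  have p1: "(\<forall>a\<in>U. B a a a) \<longleftrightarrow> (\<forall>X. X \<subseteq> U \<longrightarrow> X \<subseteq> dia U B X X)"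
  proof
    assume "\<forall>a\<in>U. B a a a" then show "\<forall>X. X \<subseteq> U \<longrightarrow> X \<subseteq> dia U B X X" by (auto simp: dia_def)
  next
    assume h: "\<forall>X. X \<subseteq> U \<longrightarrow> X \<subseteq> dia U B X X"
    show "\<forall>a\<in>U. B a a a"
    proof
      fix a assume "a \<in> U" then show "B a a a" using h[rule_format, of "{a}"] by (auto simp: dia_def)
    qed
  qed
  have p2: "(\<forall>a\<in>U. \<forall>b\<in>U. \<forall>c\<in>U. B a b c \<longrightarrow> B c b a) \<longleftrightarrow>
       (\<forall>X Y. X \<subseteq> U \<longrightarrow> Y \<subseteq> U \<longrightarrow> dia U B X Y \<subseteq> dia U B Y X)"
  proof
    assume "\<forall>a\<in>U. \<forall>b\<in>U. \<forall>c\<in>U. B a b c \<longrightarrow> B c b a"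
    then show "\<forall>X Y. X \<subseteq> U \<longrightarrow> Y \<subseteq> U \<longrightarrow> dia U B X Y \<subseteq> dia U B Y X" by (auto simp: dia_def) blast
  next
    assume h: "\<forall>X Y. X \<subseteq> U \<longrightarrow> Y \<subseteq> U \<longrightarrow> dia U B X Y \<subseteq> dia U B Y X"
    show "\<forall>a\<in>U. \<forall>b\<in>U. \<forall>c\<in>U. B a b c \<longrightarrow> B c b a"
    proof (intro ballI impI)
      fix a b c assume "a \<in> U" "b \<in> U" "c \<in> U" "B a b c"
      then show "B c b a" using h[rule_format, of "{a}" "{c}"] by (auto simp: dia_def)
    qed
  qed
  have p3: "(\<forall>a\<in>U. \<forall>b\<in>U. \<forall>c\<in>U. B a b c \<longrightarrow> B c b a) \<longleftrightarrow>
       (\<forall>X Y. X \<subseteq> U \<longrightarrow> Y \<subseteq> U \<longrightarrow> box U B X Y \<subseteq> box U B Y X)"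
  proof
    assume "\<forall>a\<in>U. \<forall>b\<in>U. \<forall>c\<in>U. B a b c \<longrightarrow> B c b a"
    then show "\<forall>X Y. X \<subseteq> U \<longrightarrow> Y \<subseteq> U \<longrightarrow> box U B X Y \<subseteq> box U B Y X" by (auto simp: box_def) (meson subsetD)
  next
    assume h: "\<forall>X Y. X \<subseteq> U \<longrightarrow> Y \<subseteq> U \<longrightarrow> box U B X Y \<subseteq> box U B Y X"
    show "\<forall>a\<in>U. \<forall>b\<in>U. \<forall>c\<in>U. B a b c \<longrightarrow> B c b a"
    proof (intro ballI impI)
      fix a b c assume "a \<in> U" "b \<in> U" "c \<in> U" "B a b c"
      then show "B c b a" using h[rule_format, of "{a}" "{c}"] by (auto simp: box_def)
    qed
  qed
  have p4: "(\<forall>a\<in>U. \<forall>b\<in>U. \<forall>c\<in>U. B a b c \<longrightarrow> B a a b) \<longleftrightarrow>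
       (\<forall>X Y Z. X \<subseteq> U \<longrightarrow> Y \<subseteq> U \<longrightarrow> Z \<subseteq> U \<longrightarrow>
          Y \<inter> dia U B X Z \<subseteq> dia U B (X \<inter> dia U B X Y) Z)"
  proof
    assume h: "\<forall>a\<in>U. \<forall>b\<in>U. \<forall>c\<in>U. B a b c \<longrightarrow> B a a b"
    show "\<forall>X Y Z. X \<subseteq> U \<longrightarrow> Y \<subseteq> U \<longrightarrow> Z \<subseteq> U \<longrightarrow>
          Y \<inter> dia U B X Z \<subseteq> dia U B (X \<inter> dia U B X Y) Z"
    proof (intro allI impI subsetI)
      fix X Y Z u assume "u \<in> Y \<inter> dia U B X Z"
      then obtain x z where "u \<in> Y" "u \<in> U" "x \<in> X" "z \<in> Z" "B x u z" by (auto simp: dia_def)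
      moreover have "B x x u" using h U[OF \<open>B x u z\<close>] \<open>B x u z\<close> by blast
      ultimately show "u \<in> dia U B (X \<inter> dia U B X Y) Z" using U by (auto simp: dia_def)
    qed
  next
    assume h: "\<forall>X Y Z. X \<subseteq> U \<longrightarrow> Y \<subseteq> U \<longrightarrow> Z \<subseteq> U \<longrightarrow>
          Y \<inter> dia U B X Z \<subseteq> dia U B (X \<inter> dia U B X Y) Z"
    show "\<forall>a\<in>U. \<forall>b\<in>U. \<forall>c\<in>U. B a b c \<longrightarrow> B a a b"
    proof (intro ballI impI)
      fix a b c assume "a \<in> U" "b \<in> U" "c \<in> U" "B a b c"
      then show "B a a b" using h[rule_format, of "{a}" "{b}" "{c}"] by (auto simp: dia_def)
    qed
  qed
  have p5: "(\<forall>a\<in>U. \<forall>b\<in>U. \<forall>c\<in>U. B a b c \<and> B a c b \<longrightarrow> b = c) \<longleftrightarrow>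
       (\<forall>X Y. X \<subseteq> U \<longrightarrow> Y \<subseteq> U \<longrightarrow>
          dia U B X (box U B X (U - Y) \<inter> Y) \<subseteq> Y)"
  proof
    assume h: "\<forall>a\<in>U. \<forall>b\<in>U. \<forall>c\<in>U. B a b c \<and> B a c b \<longrightarrow> b = c"
    show "\<forall>X Y. X \<subseteq> U \<longrightarrow> Y \<subseteq> U \<longrightarrow>
          dia U B X (box U B X (U - Y) \<inter> Y) \<subseteq> Y"
    proof (intro allI impI subsetI)
      fix X Y u assume "u \<in> dia U B X (box U B X (U - Y) \<inter> Y)"
      then obtain x y where "u \<in> U" "x \<in> X" "y \<in> Y" "B x u y" and bx: "\<forall>x'\<in>X. \<forall>w\<in>U - Y. B x' y w"
        by (auto simp: dia_def box_def)
      show "u \<in> Y"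
      proof (rule ccontr)
        assume "u \<notin> Y"
        then have "B x y u" using bx \<open>x \<in> X\<close> \<open>u \<in> U\<close> by blast
        then have "u = y" using h U[OF \<open>B x u y\<close>] \<open>B x u y\<close> by blast
        then show False using \<open>u \<notin> Y\<close> \<open>y \<in> Y\<close> by simp
      qed
    qed
  next
    assume h: "\<forall>X Y. X \<subseteq> U \<longrightarrow> Y \<subseteq> U \<longrightarrow>
          dia U B X (box U B X (U - Y) \<inter> Y) \<subseteq> Y"
    show "\<forall>a\<in>U. \<forall>b\<in>U. \<forall>c\<in>U. B a b c \<and> B a c b \<longrightarrow> b = c"
    proof (intro ballI impI)
      fix a b c assume "a \<in> U" "b \<in> U" "c \<in> U" and bb: "B a b c \<and> B a c b"
      show "b = c"
      proof (rule ccontr)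
        assume "b \<noteq> c"
        have "c \<in> box U B {a} (U - (U - {b})) \<inter> (U - {b})"
          using bb \<open>c \<in> U\<close> \<open>b \<in> U\<close> \<open>b \<noteq> c\<close> by (auto simp: box_def)
        then have "b \<in> dia U B {a} (box U B {a} (U - (U - {b})) \<inter> (U - {b}))"
          using bb \<open>b \<in> U\<close> by (auto simp: dia_def)
        then have "b \<in> U - {b}" using h[rule_format, of "{a}" "U - {b}"] \<open>a \<in> U\<close> by blast
        then show False by simp
      qed
    qed
  qed
  have p6: "(\<forall>a\<in>U. \<forall>b\<in>U. B a b a \<longrightarrow> a = b) \<longleftrightarrow>
       (\<forall>X. X \<subseteq> U \<longrightarrow> X \<noteq> {} \<longrightarrow> box U B X X \<subseteq> X)"
  proof
    assume h: "\<forall>a\<in>U. \<forall>b\<in>U. B a b a \<longrightarrow> a = b"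
    show "\<forall>X. X \<subseteq> U \<longrightarrow> X \<noteq> {} \<longrightarrow> box U B X X \<subseteq> X"
    proof (intro allI impI subsetI)
      fix X u assume "X \<subseteq> U" "X \<noteq> {}" "u \<in> box U B X X"
      then obtain x where "x \<in> X" "B x u x" "u \<in> U" by (auto simp: box_def)
      then show "u \<in> X" using h \<open>X \<subseteq> U\<close> by blast
    qed
  next
    assume h: "\<forall>X. X \<subseteq> U \<longrightarrow> X \<noteq> {} \<longrightarrow> box U B X X \<subseteq> X"
    show "\<forall>a\<in>U. \<forall>b\<in>U. B a b a \<longrightarrow> a = b"
    proof (intro ballI impI)
      fix a b assume "a \<in> U" "b \<in> U" "B a b a"
      then show "a = b" using h[rule_format, of "{a}"] by (auto simp: box_def)
    qed
  qed
  have p7: "(\<forall>a\<in>U. \<forall>b\<in>U. B a a b) \<longleftrightarrow>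
       (\<forall>X Y. X \<subseteq> U \<longrightarrow> Y \<subseteq> U \<longrightarrow> Y \<noteq> {} \<longrightarrow> X \<subseteq> dia U B X Y)"
  proof
    assume h: "\<forall>a\<in>U. \<forall>b\<in>U. B a a b"
    show "\<forall>X Y. X \<subseteq> U \<longrightarrow> Y \<subseteq> U \<longrightarrow> Y \<noteq> {} \<longrightarrow> X \<subseteq> dia U B X Y"
    proof (intro allI impI subsetI)
      fix X Y x assume "X \<subseteq> U" "Y \<subseteq> U" "Y \<noteq> {}" "x \<in> X"
      then obtain y where "y \<in> Y" by blast
      then show "x \<in> dia U B X Y" using h \<open>X \<subseteq> U\<close> \<open>Y \<subseteq> U\<close> \<open>x \<in> X\<close> unfolding dia_def by blast
    qed
  next
    assume h: "\<forall>X Y. X \<subseteq> U \<longrightarrow> Y \<subseteq> U \<longrightarrow> Y \<noteq> {} \<longrightarrow> X \<subseteq> dia U B X Y"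
    show "\<forall>a\<in>U. \<forall>b\<in>U. B a a b"
    proof (intro ballI)
      fix a b assume "a \<in> U" "b \<in> U"
      then show "B a a b" using h[rule_format, of "{a}" "{b}"] by (auto simp: dia_def)
    qed
  qed
  show ?thesis using p1 p2 p3 p4 p5 p6 p7 by blast
qed

end
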